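(* Let $p$ be a prime, let $\{a^1,\ldots,a^n\}\subseteq \mathbb{Z}^m$ be a $p$-adic generating set for a cone, and let $F$ be a nonempty face of $\operatorname{cone}\{a^1,\ldots,a^n\}$. Then $\{a^i:a^i\in F\}$ is a $p$-adic generating set for the cone $F$.
   Context: A $p$-adic rational is a number $a/p^k$ with $a,k\in\mathbb{Z}$, $k\ge0$. A finite set $S\subseteq\mathbb{Z}^m$ is a $p$-adic generating set for a cone if every integral vector in the conic hull of $S$ is a conic combination of the elements of $S$ with $p$-adic coefficients. *)

theory Defs
  imports "HOL-Analysis.Analysis"
begin

definition padic_rational :: "nat \<Rightarrow> real \<Rightarrow> bool" where
  "padic_rational p r \<longleftrightarrow> (\<exists>(a::int) (k::nat). r = of_int a / (real p) ^ k)"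

definition integral_vec :: "real^'m \<Rightarrow> bool" where
  "integral_vec x \<longleftrightarrow> (\<forall>i. x $ i \<in> \<int>)"

definition conic_hull :: "(real^'m) set \<Rightarrow> (real^'m) set" where
  "conic_hull S = {x. \<exists>c. (\<forall>s\<in>S. c s \<ge> 0) \<and> x = (\<Sum>s\<in>S. c s *\<^sub>R s)}"

definition padic_generating_set :: "nat \<Rightarrow> (real^'m) set \<Rightarrow> bool" where
  "padic_generating_set p S \<longleftrightarrow> finite S \<and> (\<forall>s\<in>S. integral_vec s) \<and>
     (\<forall>x\<in>conic_hull S. integral_vec x \<longrightarrow>
        (\<exists>c. (\<forall>s\<in>S. c s \<ge> 0 \<and> padic_rational p (c s)) \<and> x = (\<Sum>s\<in>S. c s *\<^sub>R s)))"

end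

theory Submission
  imports Defs
begin

lemma face_zero:
  fixes C T :: "'a::real_vector set"
  assumes T: "T face_of C" and ne: "T \<noteq> {}" and cone: "\<And>x t. x \<in> C \<Longrightarrow> t \<ge> 0 \<Longrightarrow> t *\<^sub>R x \<in> C"
  shows "0 \<in> T"
proof -
  obtain x where x: "x \<in> T" using ne by blast
  show ?thesis
  proof (cases "x = 0")
    case True then show ?thesis using x by simp
  next
    case False
    have xC: "x \<in> C" using x T face_of_imp_subset by blast
    have "x \<in> open_segment 0 (2 *\<^sub>R x)"
      unfolding in_segment using False
      by (intro conjI exI[of _ "1/2"]) auto
    moreover have "0 \<in> C" using cone[OF xC, of 0] by simp
    moreover have "2 *\<^sub>R x \<in> C" using cone[OF xC, of 2] by simp
    ultimately show ?thesis using face_ofD[OF T] x by blast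
  qed
qed

lemma face_scale:
  fixes C T :: "'a::real_vector set"
  assumes T: "T face_of C" and cone: "\<And>x t. x \<in> C \<Longrightarrow> t \<ge> 0 \<Longrightarrow> t *\<^sub>R x \<in> C"
    and x: "x \<in> T" and t: "t \<ge> 0"
  shows "t *\<^sub>R x \<in> T"
proof -
  have z: "0 \<in> T" using face_zero[OF T _ cone] x by blast
  have cT: "convex T" using T face_of_imp_convex by blast
  have xC: "x \<in> C" using x T face_of_imp_subset by blast
  show ?thesis
  proof (cases "t \<le> 1")
    case True
    have "(1 - t) *\<^sub>R 0 + t *\<^sub>R x \<in> T" by (rule convexD[OF cT z x]) (use t True in auto)
    then show ?thesis by simp
  next
    case False
    show ?thesis
    proof (cases "x = 0")
      case True then show ?thesis using z by simp
    next
      case x0: False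
      have "x \<in> open_segment 0 (t *\<^sub>R x)"
        unfolding in_segment using False x0
        by (intro conjI exI[of _ "1/t"]) auto
      moreover have "0 \<in> C" using cone[OF xC, of 0] by simp
      moreover have "t *\<^sub>R x \<in> C" using cone[OF xC t] .
      ultimately show ?thesis using face_ofD[OF T] x by blast
    qed
  qed
qed

lemma face_split:
  fixes C T :: "'a::real_vector set"
  assumes T: "T face_of C" and cone: "\<And>x t. x \<in> C \<Longrightarrow> t \<ge> 0 \<Longrightarrow> t *\<^sub>R x \<in> C"
    and x: "x \<in> T" and u: "u \<in> C" and xu: "x - u \<in> C"
  shows "u \<in> T"
proof -
  have a: "2 *\<^sub>R u \<in> C" using cone[OF u, of 2] by simp
  have b: "2 *\<^sub>R (x - u) \<in> C" using cone[OF xu, of 2] by simp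
  have "2 *\<^sub>R u \<in> T"
  proof (cases "2 *\<^sub>R u = 2 *\<^sub>R (x - u)")
    case True
    then have "u = x - u" by simp
    then have "x = 2 *\<^sub>R u" by (metis diff_add_cancel scaleR_2)
    then show ?thesis using x by simp
  next
    case False
    have "x \<in> open_segment (2 *\<^sub>R u) (2 *\<^sub>R (x - u))"
      unfolding in_segment using False
      by (intro conjI exI[of _ "1/2"]) (auto simp: algebra_simps)
    then show ?thesis using face_ofD[OF T _ a b x] by blast
  qed
  from face_scale[OF T cone this, of "1/2"] show ?thesis by simp
qed

lemma face_sum:
  fixes C T :: "'a::real_vector set"
  assumes T: "T face_of C" and cone: "\<And>x t. x \<in> C \<Longrightarrow> t \<ge> 0 \<Longrightarrow> t *\<^sub>R x \<in> C"
    and ne: "T \<noteq> {}"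
  shows "finite A \<Longrightarrow> (\<And>a. a \<in> A \<Longrightarrow> f a \<in> T) \<Longrightarrow> sum f A \<in> T"
proof (induction A rule: finite_induct)
  case empty
  then show ?case using face_zero[OF T ne cone] by simp
next
  case (insert a A)
  have cT: "convex T" using T face_of_imp_convex by blast
  have "(1/2) *\<^sub>R f a + (1/2) *\<^sub>R sum f A \<in> T"
    by (rule convexD[OF cT]) (use insert in auto)
  from face_scale[OF T cone this, of 2] insert show ?case
    by (simp add: algebra_simps)
qed

lemma conic_hull_cone:
  assumes "x \<in> conic_hull S" "t \<ge> 0"
  shows "t *\<^sub>R x \<in> conic_hull S"
proof -
  obtain c where c: "\<forall>s\<in>S. c s \<ge> 0" "x = (\<Sum>s\<in>S. c s *\<^sub>R s)"
    using assms(1) unfolding conic_hull_def by blast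
  show ?thesis unfolding conic_hull_def
    by (rule CollectI, rule exI[of _ "\<lambda>s. t * c s"])
       (use c assms(2) in \<open>auto simp: scaleR_sum_right\<close>)
qed

lemma conic_hull_elem:
  assumes "finite S" "s \<in> S"
  shows "s \<in> conic_hull S"
proof -
  have "(\<Sum>t\<in>S. (if t = s then 1 else 0) *\<^sub>R t) = (\<Sum>t\<in>S. if t = s then t else 0)"
    by (rule sum.cong) auto
  also have "\<dots> = s" using assms by (simp add: sum.delta')
  finally show ?thesis unfolding conic_hull_def
    by (intro CollectI exI[of _ "\<lambda>t. if t = s then 1 else 0"]) auto
qed

lemma conic_hull_remove:
  assumes "finite S" "s \<in> S" "\<forall>s\<in>S. c s \<ge> 0"
  shows "(\<Sum>s\<in>S. c s *\<^sub>R s) - c s *\<^sub>R s \<in> conic_hull S"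
proof -
  have eq: "(\<Sum>t\<in>S. (c(s:=0)) t *\<^sub>R t) = (\<Sum>t\<in>S. c t *\<^sub>R t) - c s *\<^sub>R s"
    using assms by (simp add: sum.remove[of S s] sum.remove[of S s "\<lambda>t. (c(s:=0)) t *\<^sub>R t"])
  have nn: "\<forall>t\<in>S. (c(s:=0)) t \<ge> 0" using assms by auto
  have "\<exists>c'. (\<forall>t\<in>S. c' t \<ge> 0) \<and> (\<Sum>t\<in>S. c t *\<^sub>R t) - c s *\<^sub>R s = (\<Sum>t\<in>S. c' t *\<^sub>R t)"
    by (rule exI[of _ "c(s:=0)"], rule conjI[OF nn eq[symmetric]])
  then show ?thesis unfolding conic_hull_def by (rule CollectI)
qed

lemma face_coeff:
  fixes S F :: "(real^'m) set"
  assumes fin: "finite S" and F: "F face_of conic_hull S"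
    and c: "\<forall>s\<in>S. c s \<ge> 0" and x: "(\<Sum>s\<in>S. c s *\<^sub>R s) \<in> F"
    and s: "s \<in> S" and pos: "c s > 0"
  shows "s \<in> F"
proof -
  have cone: "\<And>x t. x \<in> conic_hull S \<Longrightarrow> t \<ge> 0 \<Longrightarrow> t *\<^sub>R x \<in> conic_hull S"
    by (rule conic_hull_cone)
  have u: "c s *\<^sub>R s \<in> conic_hull S"
    using conic_hull_cone[OF conic_hull_elem[OF fin s], of "c s"] pos by simp
  have "c s *\<^sub>R s \<in> F"
    by (rule face_split[OF F cone x u conic_hull_remove[OF fin s c]])
  from face_scale[OF F cone this, of "1 / c s"] pos show ?thesis by simp
qed

theorem proposition3p5:
  fixes p :: nat and S F :: "(real^'m) set"
  assumes "prime p"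
    and "padic_generating_set p S"
    and "F face_of conic_hull S"
    and "F \<noteq> {}"
  shows "conic_hull {a \<in> S. a \<in> F} = F \<and> padic_generating_set p {a \<in> S. a \<in> F}"
proof -
  have fin: "finite S" and intS: "\<forall>s\<in>S. integral_vec s"
    and gen: "\<forall>x\<in>conic_hull S. integral_vec x \<longrightarrow>
        (\<exists>c. (\<forall>s\<in>S. c s \<ge> 0 \<and> padic_rational p (c s)) \<and> x = (\<Sum>s\<in>S. c s *\<^sub>R s))"
    using assms(2) unfolding padic_generating_set_def by auto
  let ?S = "{a \<in> S. a \<in> F}"
  have fin': "finite ?S" using fin by simp
  have cone: "\<And>x t. x \<in> conic_hull S \<Longrightarrow> t \<ge> 0 \<Longrightarrow> t *\<^sub>R x \<in> conic_hull S"
    by (rule conic_hull_cone)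
  have restrict: "(\<Sum>s\<in>S. c s *\<^sub>R s) = (\<Sum>s\<in>?S. c s *\<^sub>R s)"
    if c: "\<forall>s\<in>S. c s \<ge> 0" and x: "(\<Sum>s\<in>S. c s *\<^sub>R s) \<in> F" for c
  proof (rule sym, rule sum.mono_neutral_left[OF fin])
    show "?S \<subseteq> S" by auto
    show "\<forall>i\<in>S - ?S. c i *\<^sub>R i = 0"
    proof
      fix i assume i: "i \<in> S - ?S"
      have "\<not> c i > 0" using face_coeff[OF fin assms(3) c x, of i] i by auto
      then have "c i = 0" using c i by force
      then show "c i *\<^sub>R i = 0" by simp
    qed
  qed
  have eq: "conic_hull ?S = F"
  proof
    show "conic_hull ?S \<subseteq> F"
    proof
      fix x assume "x \<in> conic_hull ?S"
      then obtain c where c: "\<forall>s\<in>?S. c s \<ge> 0" "x = (\<Sum>s\<in>?S. c s *\<^sub>R s)"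
        unfolding conic_hull_def by blast
      show "x \<in> F" unfolding c(2)
        by (rule face_sum[OF assms(3) cone assms(4) fin'])
           (use face_scale[OF assms(3) cone] c(1) in auto)
    qed
  next
    show "F \<subseteq> conic_hull ?S"
    proof
      fix x assume x: "x \<in> F"
      then have "x \<in> conic_hull S" using assms(3) face_of_imp_subset by blast
      then obtain c where c: "\<forall>s\<in>S. c s \<ge> 0" "x = (\<Sum>s\<in>S. c s *\<^sub>R s)"
        unfolding conic_hull_def by blast
      have "x = (\<Sum>s\<in>?S. c s *\<^sub>R s)" using restrict[OF c(1)] c(2) x by simp
      then show "x \<in> conic_hull ?S" unfolding conic_hull_def using c(1) by auto
    qed
  qed
  have "padic_generating_set p ?S"
    unfolding padic_generating_set_def
  proof (intro conjI ballI impI)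
    show "finite ?S" by (rule fin')
    show "integral_vec s" if "s \<in> ?S" for s using intS that by auto
    fix x assume x: "x \<in> conic_hull ?S" and ix: "integral_vec x"
    have xF: "x \<in> F" using x eq by simp
    then have "x \<in> conic_hull S" using assms(3) face_of_imp_subset by blast
    then obtain c where c: "\<forall>s\<in>S. c s \<ge> 0 \<and> padic_rational p (c s)" "x = (\<Sum>s\<in>S. c s *\<^sub>R s)"
      using gen ix by blast
    have c0: "\<forall>s\<in>S. c s \<ge> 0" using c(1) by auto
    have "x = (\<Sum>s\<in>?S. c s *\<^sub>R s)" using restrict[OF c0] c(2) xF by simp
    then show "\<exists>c. (\<forall>s\<in>?S. c s \<ge> 0 \<and> padic_rational p (c s)) \<and> x = (\<Sum>s\<in>?S. c s *\<^sub>R s)"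
      using c(1) by auto
  qed
  with eq show ?thesis by simp
qed

end
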